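(* With $n_1,n_2,c,\varepsilon,\omega,\Omega$ as below and $\mathcal{O}\subset\mathbb{R}^2_+$ bounded, for $\gamma>0$, $\tau>0$ let $\mathcal{O}_0(\gamma)$ be the set of $\xi\in\mathcal{O}$ such that for all $k\in\mathbb{Z}^2\setminus\{0\}$ and all $i,j\in\mathbb{Z}_1$: $|\langle k,\omega(\xi)\rangle|\ge\gamma|k|^{-\tau}$; $|\langle k,\omega(\xi)\rangle\pm\Omega_j(\xi)|\ge\gamma|j|^{2}|k|^{-\tau}$; $|\langle k,\omega(\xi)\rangle\pm(\Omega_i(\xi)+\Omega_j(\xi))|\ge\gamma(|i|+|j|)^2|k|^{-\tau}$; $|\langle k,\omega(\xi)\rangle+\Omega_i(\xi)-\Omega_j(\xi)|\ge\gamma(|i|-|j|)(|i|+|j|)|k|^{-\tau}$ whenever $|i|\ne|j|$; $|\langle k,\omega(\xi)\rangle+\Omega_j(\xi)-\Omega_{-j}(\xi)|\ge\gamma|j||k|^{-\tau}$ (whenever $j,-j\in\mathbb{Z}_1$). Then for $\tau$ sufficiently large there exist $\gamma_0>0$ and $C>0$ (independent of $\gamma$) such that $\mathrm{meas}(\mathcal{O}\setminus\mathcal{O}_0(\gamma))\le C\gamma$ for all $0<\gamma\le\gamma_0$.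
   Context: $n_1,n_2$ are integers with $n_2>n_1>0$, $n_1$ odd, $n_2-n_1=4$; $c>0$, $\varepsilon>0$ with $\varepsilon^{-4}>\frac{c}{2\pi}$; $\mathbb{Z}_1=\mathbb{Z}\setminus\{0,n_1,n_2\}$; $|k|=|k_1|+|k_2|$. $\omega_1(\xi)=\varepsilon^{-4}n_1^2+\frac{1}{4\pi}(n_1+n_2)c+\frac1{4\pi}(n_1-n_2)\xi_1$, $\omega_2(\xi)=\varepsilon^{-4}n_2^2+\frac{1}{4\pi}(n_1+n_2)c+\frac1{4\pi}(n_2-n_1)\xi_2$, $\Omega_j(\xi)=\varepsilon^{-4}j^2+\frac{1}{4\pi}(cj+n_1\xi_1+n_2\xi_2)$ for $j\in\mathbb{Z}_1$. "meas" is Lebesgue measure on $\mathbb{R}^2$. *)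

theory Defs
  imports "HOL-Analysis.Analysis"
begin

definition Z1 :: "int \<Rightarrow> int \<Rightarrow> int set" where
  "Z1 n1 n2 = UNIV - {0, n1, n2}"

definition knorm :: "int \<times> int \<Rightarrow> real" where
  "knorm k = real_of_int (\<bar>fst k\<bar> + \<bar>snd k\<bar>)"

definition omega1 :: "int \<Rightarrow> int \<Rightarrow> real \<Rightarrow> real \<Rightarrow> real \<times> real \<Rightarrow> real" where
  "omega1 n1 n2 c eps xi = (1 / eps ^ 4) * (real_of_int n1)^2
     + (1 / (4 * pi)) * real_of_int (n1 + n2) * c
     + (1 / (4 * pi)) * real_of_int (n1 - n2) * fst xi"

definition omega2 :: "int \<Rightarrow> int \<Rightarrow> real \<Rightarrow> real \<Rightarrow> real \<times> real \<Rightarrow> real" where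
  "omega2 n1 n2 c eps xi = (1 / eps ^ 4) * (real_of_int n2)^2
     + (1 / (4 * pi)) * real_of_int (n1 + n2) * c
     + (1 / (4 * pi)) * real_of_int (n2 - n1) * snd xi"

definition Omega :: "int \<Rightarrow> int \<Rightarrow> real \<Rightarrow> real \<Rightarrow> int \<Rightarrow> real \<times> real \<Rightarrow> real" where
  "Omega n1 n2 c eps j xi = (1 / eps ^ 4) * (real_of_int j)^2
     + (1 / (4 * pi)) * (c * real_of_int j + real_of_int n1 * fst xi + real_of_int n2 * snd xi)"

definition kdot :: "int \<Rightarrow> int \<Rightarrow> real \<Rightarrow> real \<Rightarrow> int \<times> int \<Rightarrow> real \<times> real \<Rightarrow> real" where
  "kdot n1 n2 c eps k xi =
     real_of_int (fst k) * omega1 n1 n2 c eps xi + real_of_int (snd k) * omega2 n1 n2 c eps xi"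

definition O0 :: "int \<Rightarrow> int \<Rightarrow> real \<Rightarrow> real \<Rightarrow> (real \<times> real) set \<Rightarrow> real \<Rightarrow> real \<Rightarrow> (real \<times> real) set" where
  "O0 n1 n2 c eps U \<tau> \<gamma> = {xi \<in> U. \<forall>k :: int \<times> int. k \<noteq> (0, 0) \<longrightarrow>
      (let w = kdot n1 n2 c eps k xi; Om = (\<lambda>j. Omega n1 n2 c eps j xi);
           d = knorm k powr (- \<tau>) in
        \<bar>w\<bar> \<ge> \<gamma> * d
      \<and> (\<forall>j \<in> Z1 n1 n2. \<forall>s \<in> {-1, 1::real}. \<bar>w + s * Om j\<bar> \<ge> \<gamma> * (real_of_int \<bar>j\<bar>)^2 * d)
      \<and> (\<forall>i \<in> Z1 n1 n2. \<forall>j \<in> Z1 n1 n2. \<forall>s \<in> {-1, 1::real}.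
            \<bar>w + s * (Om i + Om j)\<bar> \<ge> \<gamma> * (real_of_int (\<bar>i\<bar> + \<bar>j\<bar>))^2 * d)
      \<and> (\<forall>i \<in> Z1 n1 n2. \<forall>j \<in> Z1 n1 n2. \<bar>i\<bar> \<noteq> \<bar>j\<bar> \<longrightarrow>
            \<bar>w + Om i - Om j\<bar> \<ge> \<gamma> * real_of_int ((\<bar>i\<bar> - \<bar>j\<bar>) * (\<bar>i\<bar> + \<bar>j\<bar>)) * d)
      \<and> (\<forall>j. j \<in> Z1 n1 n2 \<and> - j \<in> Z1 n1 n2 \<longrightarrow>
            \<bar>w + Om j - Om (- j)\<bar> \<ge> \<gamma> * real_of_int \<bar>j\<bar> * d))}"

end

theory Submission
  imports Defs
begin


lemma interval_meas:
  fixes a c r :: real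
  assumes "a \<noteq> 0" "r \<ge> 0"
  shows "emeasure lborel {y. \<bar>a * y + c\<bar> < r} = ennreal (2 * r / \<bar>a\<bar>)"
proof (cases "a > 0")
  case True
  have "{y. \<bar>a * y + c\<bar> < r} = {(-c - r)/a <..< (r - c)/a}"
    using True by (auto simp: field_simps abs_less_iff)
  moreover have "(-c - r)/a \<le> (r - c)/a" using True assms by (simp add: divide_right_mono)
  ultimately show ?thesis using True by (simp add: diff_divide_distrib[symmetric])
next
  case False
  hence a: "a < 0" using assms by simp
  have "{y. \<bar>a * y + c\<bar> < r} = {(r - c)/a <..< (-c - r)/a}"
    using a by (auto simp: field_simps abs_less_iff)
  moreover have "(r - c)/a \<le> (-c - r)/a" using a assms by (simp add: divide_right_mono_neg)
  ultimately show ?thesis using a by (simp add: diff_divide_distrib[symmetric])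
qed


lemma slab_borel:
  "{p::real\<times>real. \<bar>a1 * fst p + a2 * snd p + b\<bar> < r} \<inter> cbox (-R,-R) (R,R) \<in> sets lborel"
proof -
  have "open {p::real\<times>real. \<bar>a1 * fst p + a2 * snd p + b\<bar> < r}"
    by (intro open_Collect_less continuous_intros)
  thus ?thesis by (intro sets.Int borel_open borel_closed) auto
qed

lemma slab_emeasure2:
  fixes a1 a2 b r R :: real
  assumes "a2 \<noteq> 0" "r \<ge> 0" "R \<ge> 0"
  shows "emeasure lborel ({p::real\<times>real. \<bar>a1 * fst p + a2 * snd p + b\<bar> < r} \<inter> cbox (-R,-R) (R,R))
     \<le> ennreal (2 * R) * ennreal (2 * r / \<bar>a2\<bar>)"
proof -
  let ?A = "{p::real\<times>real. \<bar>a1 * fst p + a2 * snd p + b\<bar> < r} \<inter> cbox (-R,-R) (R,R)"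
  have "emeasure lborel ?A = emeasure (lborel \<Otimes>\<^sub>M lborel) ?A" by (simp add: lborel_prod)
  also have "\<dots> = (\<integral>\<^sup>+x. emeasure lborel (Pair x -` ?A) \<partial>lborel)"
    using slab_borel[of a1 a2 b r R] by (intro lborel.emeasure_pair_measure_alt) (simp only: lborel_prod)
  also have "\<dots> \<le> (\<integral>\<^sup>+x. ennreal (2 * r / \<bar>a2\<bar>) * indicator {-R..R} x \<partial>lborel)"
  proof (intro nn_integral_mono)
    fix x :: real
    show "emeasure lborel (Pair x -` ?A) \<le> ennreal (2 * r / \<bar>a2\<bar>) * indicator {-R..R} x"
    proof (cases "x \<in> {-R..R}")
      case True
      have "Pair x -` ?A \<subseteq> {y. \<bar>a2 * y + (a1 * x + b)\<bar> < r}" by (auto simp: algebra_simps)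
      hence "emeasure lborel (Pair x -` ?A) \<le> emeasure lborel {y. \<bar>a2 * y + (a1 * x + b)\<bar> < r}"
        by (intro emeasure_mono) (auto intro!: borel_open open_Collect_less continuous_intros)
      thus ?thesis using True interval_meas[OF assms(1,2)] by simp
    next
      case False
      hence "Pair x -` ?A = {}" by (auto simp: cbox_Pair_iff)
      thus ?thesis using False by simp
    qed
  qed
  also have "\<dots> = ennreal (2 * r / \<bar>a2\<bar>) * ennreal (2 * R)"
    using assms by (subst nn_integral_cmult) auto
  finally show ?thesis by (simp add: mult.commute)
qed

lemma slab_emeasure1:
  fixes a1 a2 b r R :: real
  assumes "a1 \<noteq> 0" "r \<ge> 0" "R \<ge> 0"
  shows "emeasure lborel ({p::real\<times>real. \<bar>a1 * fst p + a2 * snd p + b\<bar> < r} \<inter> cbox (-R,-R) (R,R))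
     \<le> ennreal (2 * R) * ennreal (2 * r / \<bar>a1\<bar>)"
proof -
  let ?A = "{p::real\<times>real. \<bar>a1 * fst p + a2 * snd p + b\<bar> < r} \<inter> cbox (-R,-R) (R,R)"
  have "emeasure lborel ?A = emeasure (lborel \<Otimes>\<^sub>M lborel) ?A" by (simp add: lborel_prod)
  also have "\<dots> = (\<integral>\<^sup>+y. emeasure lborel ((\<lambda>x. (x, y)) -` ?A) \<partial>lborel)"
    using slab_borel[of a1 a2 b r R] by (intro lborel_pair.emeasure_pair_measure_alt2) (simp only: lborel_prod)
  also have "\<dots> \<le> (\<integral>\<^sup>+x. ennreal (2 * r / \<bar>a1\<bar>) * indicator {-R..R} x \<partial>lborel)"
  proof (intro nn_integral_mono)
    fix y :: real
    show "emeasure lborel ((\<lambda>x. (x, y)) -` ?A) \<le> ennreal (2 * r / \<bar>a1\<bar>) * indicator {-R..R} y"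
    proof (cases "y \<in> {-R..R}")
      case True
      have "(\<lambda>x. (x, y)) -` ?A \<subseteq> {x. \<bar>a1 * x + (a2 * y + b)\<bar> < r}" by (auto simp: algebra_simps)
      hence "emeasure lborel ((\<lambda>x. (x, y)) -` ?A) \<le> emeasure lborel {x. \<bar>a1 * x + (a2 * y + b)\<bar> < r}"
        by (intro emeasure_mono) (auto intro!: borel_open open_Collect_less continuous_intros)
      thus ?thesis using True interval_meas[OF assms(1,2)] by simp
    next
      case False
      hence "(\<lambda>x. (x, y)) -` ?A = {}" by (auto simp: cbox_Pair_iff)
      thus ?thesis using False by simp
    qed
  qed
  also have "\<dots> = ennreal (2 * r / \<bar>a1\<bar>) * ennreal (2 * R)"
    using assms by (subst nn_integral_cmult) auto
  finally show ?thesis by (simp add: mult.commute)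
qed


lemma slab_sets:
  assumes "Ob \<in> sets lebesgue"
  shows "{p\<in>Ob. \<bar>a1 * fst p + a2 * snd p + b\<bar> < (r::real)} \<in> sets lebesgue"
proof -
  have "open {p::real\<times>real. \<bar>a1 * fst p + a2 * snd p + b\<bar> < r}"
    by (intro open_Collect_less continuous_intros)
  hence "{p::real\<times>real. \<bar>a1 * fst p + a2 * snd p + b\<bar> < r} \<in> sets lebesgue"
    by (metis borel_open sets_completionI_sets sets_lborel)
  moreover have "{p\<in>Ob. \<bar>a1 * fst p + a2 * snd p + b\<bar> < (r::real)} = Ob \<inter> {p::real\<times>real. \<bar>a1 * fst p + a2 * snd p + b\<bar> < r}"
    by auto
  ultimately show ?thesis using assms by auto
qed

lemma slab_measure:
  fixes a1 a2 b r R \<alpha> :: real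
  assumes "Ob \<subseteq> cbox (-R,-R) (R,R)" "R \<ge> 0" "\<alpha> > 0" "\<bar>a1\<bar> \<ge> \<alpha> \<or> \<bar>a2\<bar> \<ge> \<alpha>" "r \<ge> 0"
  shows "measure lebesgue {p\<in>Ob. \<bar>a1 * fst p + a2 * snd p + b\<bar> < r} \<le> 4 * R * r / \<alpha>"
proof -
  let ?A = "{p::real\<times>real. \<bar>a1 * fst p + a2 * snd p + b\<bar> < r} \<inter> cbox (-R,-R) (R,R)"
  have sub: "{p\<in>Ob. \<bar>a1 * fst p + a2 * snd p + b\<bar> < r} \<subseteq> ?A" using assms(1) by auto
  have "emeasure lborel ?A \<le> ennreal (4 * R * r / \<alpha>)"
  proof (cases "\<bar>a1\<bar> \<ge> \<alpha>")
    case True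
    hence "a1 \<noteq> 0" using assms by auto
    have "ennreal (2 * R) * ennreal (2 * r / \<bar>a1\<bar>) = ennreal (2 * R * (2 * r / \<bar>a1\<bar>))"
      using assms by (intro ennreal_mult[symmetric]) auto
    also have "\<dots> \<le> ennreal (4 * R * r / \<alpha>)"
    proof (intro ennreal_leI)
      have "2 * r / \<bar>a1\<bar> \<le> 2 * r / \<alpha>" using True assms by (intro divide_left_mono) auto
      hence "2 * R * (2 * r / \<bar>a1\<bar>) \<le> 2 * R * (2 * r / \<alpha>)" using assms by (intro mult_left_mono) auto
      thus "2 * R * (2 * r / \<bar>a1\<bar>) \<le> 4 * R * r / \<alpha>" by simp
    qed
    finally show ?thesis using slab_emeasure1[OF \<open>a1 \<noteq> 0\<close> assms(5,2), of a2 b] by (meson order_trans)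
  next
    case False
    hence T: "\<bar>a2\<bar> \<ge> \<alpha>" using assms by auto
    hence "a2 \<noteq> 0" using assms by auto
    have "ennreal (2 * R) * ennreal (2 * r / \<bar>a2\<bar>) = ennreal (2 * R * (2 * r / \<bar>a2\<bar>))"
      using assms by (intro ennreal_mult[symmetric]) auto
    also have "\<dots> \<le> ennreal (4 * R * r / \<alpha>)"
    proof (intro ennreal_leI)
      have "2 * r / \<bar>a2\<bar> \<le> 2 * r / \<alpha>" using T assms by (intro divide_left_mono) auto
      hence "2 * R * (2 * r / \<bar>a2\<bar>) \<le> 2 * R * (2 * r / \<alpha>)" using assms by (intro mult_left_mono) auto
      thus "2 * R * (2 * r / \<bar>a2\<bar>) \<le> 4 * R * r / \<alpha>" by simp
    qed
    finally show ?thesis using slab_emeasure2[OF \<open>a2 \<noteq> 0\<close> assms(5,2), of a1 b] by (meson order_trans)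
  qed
  hence "emeasure lebesgue ?A \<le> ennreal (4 * R * r / \<alpha>)"
    using slab_borel[of a1 a2 b r R] by (simp add: emeasure_completion)
  moreover have "emeasure lebesgue {p\<in>Ob. \<bar>a1 * fst p + a2 * snd p + b\<bar> < r} \<le> emeasure lebesgue ?A"
    using sub slab_borel[of a1 a2 b r R] by (intro emeasure_mono) (auto intro: sets_completionI_sets)
  ultimately have le: "emeasure lebesgue {p\<in>Ob. \<bar>a1 * fst p + a2 * snd p + b\<bar> < r} \<le> ennreal (4 * R * r / \<alpha>)"
    by (meson order_trans)
  have nn: "0 \<le> 4 * R * r / \<alpha>" using assms by simp
  have "emeasure lebesgue {p\<in>Ob. \<bar>a1 * fst p + a2 * snd p + b\<bar> < r} \<noteq> top"
    using le by (metis ennreal_neq_top neq_top_trans)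
  hence "ennreal (measure lebesgue {p\<in>Ob. \<bar>a1 * fst p + a2 * snd p + b\<bar> < r}) \<le> ennreal (4 * R * r / \<alpha>)"
    using le by (simp add: emeasure_eq_ennreal_measure)
  thus ?thesis using nn ennreal_le_iff by blast
qed



definition Fx :: "int \<Rightarrow> int \<Rightarrow> real \<Rightarrow> real \<Rightarrow> int \<times> int \<Rightarrow> nat \<Rightarrow> int \<Rightarrow> int \<Rightarrow> real \<Rightarrow> real \<times> real \<Rightarrow> real" where
  "Fx n1 n2 c eps k t i j s xi =
    (if t = 1 then kdot n1 n2 c eps k xi
     else if t = 2 then kdot n1 n2 c eps k xi + s * Omega n1 n2 c eps j xi
     else if t = 3 then kdot n1 n2 c eps k xi + s * (Omega n1 n2 c eps i xi + Omega n1 n2 c eps j xi)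
     else if t = 4 then kdot n1 n2 c eps k xi + Omega n1 n2 c eps i xi - Omega n1 n2 c eps j xi
     else kdot n1 n2 c eps k xi + Omega n1 n2 c eps j xi - Omega n1 n2 c eps (-j) xi)"

definition A1 :: "int \<Rightarrow> int \<times> int \<Rightarrow> nat \<Rightarrow> real \<Rightarrow> real" where
  "A1 n1 k t s = (if t = 2 then (- 4 * real_of_int (fst k) + s * real_of_int n1) / (4 * pi)
     else if t = 3 then (- 4 * real_of_int (fst k) + 2 * s * real_of_int n1) / (4 * pi)
     else - real_of_int (fst k) / pi)"

definition A2 :: "int \<Rightarrow> int \<times> int \<Rightarrow> nat \<Rightarrow> real \<Rightarrow> real" where
  "A2 n2 k t s = (if t = 2 then (4 * real_of_int (snd k) + s * real_of_int n2) / (4 * pi)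
     else if t = 3 then (4 * real_of_int (snd k) + 2 * s * real_of_int n2) / (4 * pi)
     else real_of_int (snd k) / pi)"

lemma Fx_affine:
  assumes "n2 - n1 = 4"
  shows "Fx n1 n2 c eps k t i j s xi = A1 n1 k t s * fst xi + A2 n2 k t s * snd xi + Fx n1 n2 c eps k t i j s (0,0)"
proof -
  have n2: "real_of_int n2 = real_of_int n1 + 4" using assms by linarith
  show ?thesis
    unfolding Fx_def A1_def A2_def kdot_def omega1_def omega2_def Omega_def
    by (simp add: n2 field_simps)
qed


lemma int_abs_real: "1 \<le> \<bar>m::int\<bar> \<Longrightarrow> 1 \<le> \<bar>real_of_int m\<bar>"
  by (metis of_int_1_le_iff of_int_abs)

lemma odd_ne: "odd (n1::int) \<Longrightarrow> (s::real) \<in> {-1,1} \<Longrightarrow> \<bar>- 4 * real_of_int a + s * real_of_int n1\<bar> \<ge> 1"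
proof -
  assume o: "odd n1" and s: "s \<in> {-1,1}"
  have "- 4 * a + n1 \<noteq> 0" "- 4 * a - n1 \<noteq> 0" using o by presburger+
  hence "\<bar>- 4 * a + n1\<bar> \<ge> 1" "\<bar>- 4 * a - n1\<bar> \<ge> 1" by linarith+
  hence "\<bar>- 4 * real_of_int a + real_of_int n1\<bar> \<ge> 1" "\<bar>- 4 * real_of_int a - real_of_int n1\<bar> \<ge> 1"
    using int_abs_real by simp_all
  thus ?thesis using s by auto
qed

lemma odd_ne2: "odd (n1::int) \<Longrightarrow> (s::real) \<in> {-1,1} \<Longrightarrow> \<bar>- 4 * real_of_int a + 2 * s * real_of_int n1\<bar> \<ge> 1"
proof -
  assume o: "odd n1" and s: "s \<in> {-1,1}"
  have "- 4 * a + 2 * n1 \<noteq> 0" "- 4 * a - 2 * n1 \<noteq> 0" using o by presburger+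
  hence "\<bar>- 4 * a + 2 * n1\<bar> \<ge> 1" "\<bar>- 4 * a - 2 * n1\<bar> \<ge> 1" by linarith+
  hence "\<bar>- 4 * real_of_int a + 2 * real_of_int n1\<bar> \<ge> 1" "\<bar>- 4 * real_of_int a - 2 * real_of_int n1\<bar> \<ge> 1"
    using int_abs_real by simp_all
  thus ?thesis using s by auto
qed

lemma coef_bound:
  assumes "odd n1" "s \<in> {-1,1}" "k \<noteq> (0,0)"
  shows "\<bar>A1 n1 k t s\<bar> \<ge> 1 / (4 * pi) \<or> \<bar>A2 n2 k t s\<bar> \<ge> 1 / (4 * pi)"
proof -
  have pi4: "1 / (4 * pi) \<le> 1 / pi" using pi_gt_zero by (intro divide_left_mono) auto
  consider "t = 2" | "t = 3" | "t \<noteq> 2" "t \<noteq> 3" by blast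
  thus ?thesis
  proof cases
    case 1
    have "\<bar>A1 n1 k t s\<bar> = \<bar>- 4 * real_of_int (fst k) + s * real_of_int n1\<bar> / (4 * pi)"
      using 1 by (simp add: A1_def abs_divide)
    thus ?thesis using odd_ne[OF assms(1,2), of "fst k"] by (simp add: divide_right_mono)
  next
    case 2
    have "\<bar>A1 n1 k t s\<bar> = \<bar>- 4 * real_of_int (fst k) + 2 * s * real_of_int n1\<bar> / (4 * pi)"
      using 2 by (simp add: A1_def abs_divide)
    thus ?thesis using odd_ne2[OF assms(1,2), of "fst k"] by (simp add: divide_right_mono)
  next
    case 3
    show ?thesis
    proof (cases "fst k = 0")
      case True
      hence "snd k \<noteq> 0" using assms(3) by (cases k) auto
      hence "\<bar>real_of_int (snd k)\<bar> \<ge> 1" by linarith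
      hence "\<bar>A2 n2 k t s\<bar> \<ge> 1 / pi" using 3 by (simp add: A2_def abs_divide divide_right_mono)
      thus ?thesis using pi4 by linarith
    next
      case False
      hence "\<bar>real_of_int (fst k)\<bar> \<ge> 1" by linarith
      hence "\<bar>A1 n1 k t s\<bar> \<ge> 1 / pi" using 3 by (simp add: A1_def abs_divide divide_right_mono)
      thus ?thesis using pi4 by linarith
    qed
  qed
qed

lemma Om_lower:
  assumes "fst xi \<ge> 0" "snd xi \<ge> 0" "n1 \<ge> 0" "n2 \<ge> 0" "c \<ge> 0"
  shows "Omega n1 n2 c eps j xi \<ge> (1 / eps ^ 4 - c / (4 * pi)) * (real_of_int j)^2"
proof -
  have jj: "- real_of_int j \<le> (real_of_int j)^2"
  proof -
    have "- j \<le> j^2"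
    proof (cases "j \<ge> 0")
      case True thus ?thesis by (smt (verit) zero_le_power2)
    next
      case False
      hence "0 \<le> j * (j + 1)" by (intro mult_nonpos_nonpos) auto
      thus ?thesis by (simp add: power2_eq_square algebra_simps)
    qed
    thus ?thesis by (metis of_int_le_iff of_int_minus of_int_power)
  qed
  have "c * (- real_of_int j) \<le> c * (real_of_int j)^2" by (rule mult_left_mono[OF jj assms(5)])
  hence "c * real_of_int j \<ge> - c * (real_of_int j)^2" by simp
  moreover have "real_of_int n1 * fst xi + real_of_int n2 * snd xi \<ge> 0" using assms by simp
  ultimately have "c * real_of_int j + real_of_int n1 * fst xi + real_of_int n2 * snd xi \<ge> - c * (real_of_int j)^2"
    by linarith
  hence "(1 / (4 * pi)) * (c * real_of_int j + real_of_int n1 * fst xi + real_of_int n2 * snd xi) \<ge> (1 / (4 * pi)) * (- c * (real_of_int j)^2)"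
    by (intro mult_left_mono) (auto simp: pi_gt_zero less_imp_le)
  moreover have "(1 / eps ^ 4 - c / (4 * pi)) * (real_of_int j)^2 = 1 / eps ^ 4 * (real_of_int j)^2 + (1 / (4 * pi)) * (- c * (real_of_int j)^2)"
    by (simp add: left_diff_distrib)
  ultimately show ?thesis unfolding Omega_def by linarith
qed

lemma Om_diff:
  assumes "\<bar>i\<bar> > \<bar>j\<bar>" "c \<ge> 0"
  shows "Omega n1 n2 c eps i xi - Omega n1 n2 c eps j xi \<ge> (1 / eps ^ 4 - c / (4 * pi)) * real_of_int ((\<bar>i\<bar> - \<bar>j\<bar>) * (\<bar>i\<bar> + \<bar>j\<bar>))"
proof -
  have e: "(\<bar>i\<bar> - \<bar>j\<bar>) * (\<bar>i\<bar> + \<bar>j\<bar>) = i^2 - j^2" by (simp add: power2_eq_square algebra_simps)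
  have "\<bar>i\<bar> - \<bar>j\<bar> \<ge> 1" using assms(1) by linarith
  hence "1 * (\<bar>i\<bar> + \<bar>j\<bar>) \<le> (\<bar>i\<bar> - \<bar>j\<bar>) * (\<bar>i\<bar> + \<bar>j\<bar>)" by (intro mult_right_mono) auto
  hence h1: "\<bar>i\<bar> + \<bar>j\<bar> \<le> i^2 - j^2" using e by simp
  have "j - i \<le> \<bar>i\<bar> + \<bar>j\<bar>" by arith
  hence "j - i \<le> i^2 - j^2" using h1 by (rule order_trans)
  hence ij: "real_of_int j - real_of_int i \<le> real_of_int i ^ 2 - real_of_int j ^ 2"
    by (metis of_int_diff of_int_le_iff of_int_power)
  have "c * (real_of_int j - real_of_int i) \<le> c * (real_of_int i ^ 2 - real_of_int j ^ 2)"
    by (rule mult_left_mono[OF ij assms(2)])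
  hence "(1/(4*pi)) * (c * (real_of_int j - real_of_int i)) \<le> (1/(4*pi)) * (c * (real_of_int i ^ 2 - real_of_int j ^ 2))"
    by (rule mult_left_mono) (auto simp: pi_gt_zero less_imp_le)
  moreover have "Omega n1 n2 c eps i xi - Omega n1 n2 c eps j xi = 1 / eps ^ 4 * (real_of_int i ^ 2 - real_of_int j ^ 2)
      - (1/(4*pi)) * (c * (real_of_int j - real_of_int i))"
    unfolding Omega_def by (simp add: right_diff_distrib distrib_left)
  moreover have "(1 / eps ^ 4 - c / (4 * pi)) * real_of_int ((\<bar>i\<bar> - \<bar>j\<bar>) * (\<bar>i\<bar> + \<bar>j\<bar>))
     = 1 / eps ^ 4 * (real_of_int i ^ 2 - real_of_int j ^ 2) - (1/(4*pi)) * (c * (real_of_int i ^ 2 - real_of_int j ^ 2))"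
    unfolding e by (simp add: left_diff_distrib)
  ultimately show ?thesis by linarith
qed

lemma Om_neg: "Omega n1 n2 c eps j xi - Omega n1 n2 c eps (-j) xi = c * real_of_int j / (2 * pi)"
  unfolding Omega_def by (simp add: field_simps)


lemma abs_le_sq_int: "\<bar>real_of_int j\<bar> \<le> (real_of_int j)^2"
proof (cases "j = 0")
  case False
  hence "1 \<le> \<bar>real_of_int j\<bar>" by (intro int_abs_real) linarith
  hence "1 * \<bar>real_of_int j\<bar> \<le> \<bar>real_of_int j\<bar> * \<bar>real_of_int j\<bar>" by (intro mult_right_mono) auto
  thus ?thesis by (simp add: power2_eq_square abs_mult[symmetric])
qed simp

lemma gen_bound:
  fixes \<kappa> A X w s g d N :: real
  assumes "0 < \<kappa>" "0 \<le> A" "\<kappa> * A \<le> X" "\<bar>w + s * X\<bar> < g * A * d" "s \<in> {-1,1}" "\<bar>w\<bar> \<le> N"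
    "g \<le> \<kappa> / 2" "0 \<le> d" "d \<le> 1" "0 \<le> g"
  shows "A \<le> 2 * N / \<kappa>"
proof -
  have "g * A * d \<le> g * A * 1" using assms by (intro mult_left_mono) auto
  also have "g * A \<le> \<kappa> / 2 * A" using assms by (intro mult_right_mono) auto
  finally have u: "g * A * d \<le> \<kappa> / 2 * A" by simp
  have "X - N \<le> \<bar>w + s * X\<bar>" using assms(5,6) by auto
  hence "\<kappa> * A < 2 * N" using u assms(3,4) by linarith
  thus ?thesis using assms(1) by (simp add: pos_le_divide_eq mult.commute less_imp_le)
qed

lemma t5_bound:
  fixes w c g d N :: real
  assumes "\<bar>w + c * real_of_int j / (2 * pi)\<bar> < g * real_of_int \<bar>j\<bar> * d" "c > 0" "\<bar>w\<bar> \<le> N"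
    "0 \<le> g" "g \<le> c / (4 * pi)" "0 \<le> d" "d \<le> 1"
  shows "\<bar>real_of_int j\<bar> \<le> 4 * pi * N / c"
proof -
  have "g * real_of_int \<bar>j\<bar> * d \<le> g * real_of_int \<bar>j\<bar> * 1" using assms by (intro mult_left_mono) auto
  also have "g * real_of_int \<bar>j\<bar> \<le> c / (4 * pi) * \<bar>real_of_int j\<bar>" unfolding of_int_abs using assms by (intro mult_right_mono) auto
  finally have u: "g * real_of_int \<bar>j\<bar> * d \<le> c / (4 * pi) * \<bar>real_of_int j\<bar>" by simp
  have e: "\<bar>c * real_of_int j / (2 * pi)\<bar> = 2 * (c / (4 * pi) * \<bar>real_of_int j\<bar>)"
    using assms(2) pi_gt_zero by (simp add: abs_mult abs_divide)
  have "\<bar>c * real_of_int j / (2 * pi)\<bar> - N \<le> \<bar>w + c * real_of_int j / (2 * pi)\<bar>" using assms(3) by linarith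
  hence "c / (4 * pi) * \<bar>real_of_int j\<bar> < N" using u e assms(1) by linarith
  hence "\<bar>real_of_int j\<bar> * c < N * (4 * pi)" using pi_gt_zero by (simp add: field_simps)
  hence "\<bar>real_of_int j\<bar> * c \<le> 4 * pi * N" by (simp add: mult.commute)
  thus ?thesis using assms(2) pi_gt_zero by (simp add: pos_le_divide_eq)
qed


definition wt :: "nat \<Rightarrow> int \<Rightarrow> int \<Rightarrow> real" where
  "wt t i j = (if t = 1 then 1 else if t = 2 then (real_of_int \<bar>j\<bar>)^2
     else if t = 3 then (real_of_int (\<bar>i\<bar> + \<bar>j\<bar>))^2
     else if t = 4 then real_of_int ((\<bar>i\<bar> - \<bar>j\<bar>) * (\<bar>i\<bar> + \<bar>j\<bar>)) else real_of_int \<bar>j\<bar>)"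

definition valid :: "nat \<Rightarrow> int \<Rightarrow> int \<Rightarrow> real \<Rightarrow> bool" where
  "valid t i j s \<longleftrightarrow> t \<in> {1..5} \<and> s \<in> {-1,1} \<and> (t = 1 \<longrightarrow> i = 0 \<and> j = 0) \<and> (t = 2 \<longrightarrow> i = 0)
     \<and> (t = 4 \<longrightarrow> \<bar>i\<bar> \<noteq> \<bar>j\<bar>) \<and> (t = 5 \<longrightarrow> i = 0)"

lemma idx_bound:
  assumes xi: "fst xi > 0" "snd xi > 0" and n: "0 < n1" "0 < n2" and c: "c > 0"
    and ka: "\<kappa> = 1 / eps ^ 4 - c / (4 * pi)" "\<kappa> > 0"
    and w: "\<bar>kdot n1 n2 c eps k xi\<bar> \<le> N" "N \<ge> 0"
    and g: "0 < \<gamma>" "\<gamma> \<le> \<kappa> / 4" "\<gamma> \<le> c / (4 * pi)" and d: "0 \<le> d" "d \<le> 1"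
    and v: "valid t i j s" and F: "\<bar>Fx n1 n2 c eps k t i j s xi\<bar> < \<gamma> * wt t i j * d"
  shows "\<bar>real_of_int i\<bar> \<le> max (2 * N / \<kappa>) (4 * pi * N / c) \<and> \<bar>real_of_int j\<bar> \<le> max (2 * N / \<kappa>) (4 * pi * N / c)"
proof -
  let ?Q = "max (2 * N / \<kappa>) (4 * pi * N / c)"
  let ?w = "kdot n1 n2 c eps k xi"
  let ?O = "\<lambda>j. Omega n1 n2 c eps j xi"
  have "0 \<le> 2 * N / \<kappa>" using w(2) ka(2) by simp
  hence Q0: "0 \<le> ?Q" by (simp add: le_max_iff_disj)
  have Ol: "\<And>j. \<kappa> * (real_of_int j)^2 \<le> ?O j"
    using Om_lower[of xi n1 n2 c] xi n c ka(1) by (simp add: less_imp_le)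
  have t: "t \<in> {1..5}" and s: "s \<in> {-1,1}" using v by (auto simp: valid_def)
  hence "t = 1 \<or> t = 2 \<or> t = 3 \<or> t = 4 \<or> t = 5" by auto
  moreover
  { assume t1: "t = 1"
    hence ?thesis using v Q0 by (simp add: valid_def) }
  moreover
  { assume t2: "t = 2"
    hence i0: "i = 0" using v by (simp add: valid_def)
    have "\<bar>?w + s * ?O j\<bar> < \<gamma> * (real_of_int j)^2 * d" using F t2 by (simp add: Fx_def wt_def)
    hence "(real_of_int j)^2 \<le> 2 * N / \<kappa>"
      using gen_bound[OF ka(2) _ Ol[of j] _ s w(1), where g=\<gamma> and d=d] g d by simp
    hence "\<bar>real_of_int j\<bar> \<le> 2 * N / \<kappa>" using abs_le_sq_int[of j] by linarith
    hence ?thesis using i0 Q0 by (simp add: le_max_iff_disj) }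
  moreover
  { assume t3: "t = 3"
    have sq: "(real_of_int (\<bar>i\<bar> + \<bar>j\<bar>))^2 \<le> 2 * ((real_of_int i)^2 + (real_of_int j)^2)"
    proof -
      have "0 \<le> (\<bar>real_of_int i\<bar> - \<bar>real_of_int j\<bar>)^2" by simp
      thus ?thesis by (simp add: power2_eq_square algebra_simps)
    qed
    have "\<gamma> * (real_of_int (\<bar>i\<bar> + \<bar>j\<bar>))^2 * d \<le> \<gamma> * (2 * ((real_of_int i)^2 + (real_of_int j)^2)) * d"
      using sq g d by (intro mult_right_mono mult_left_mono) auto
    moreover have "\<bar>?w + s * (?O i + ?O j)\<bar> < \<gamma> * (real_of_int (\<bar>i\<bar> + \<bar>j\<bar>))^2 * d"
      using F t3 by (simp add: Fx_def wt_def)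
    ultimately have "\<bar>?w + s * (?O i + ?O j)\<bar> < (2 * \<gamma>) * ((real_of_int i)^2 + (real_of_int j)^2) * d"
      by (simp add: algebra_simps)
    moreover have "\<kappa> * ((real_of_int i)^2 + (real_of_int j)^2) \<le> ?O i + ?O j"
      using Ol[of i] Ol[of j] by (simp add: distrib_left)
    ultimately have "(real_of_int i)^2 + (real_of_int j)^2 \<le> 2 * N / \<kappa>"
      using gen_bound[OF ka(2) _ _ _ s w(1), where A="(real_of_int i)^2 + (real_of_int j)^2" and X="?O i + ?O j" and g="2 * \<gamma>" and d=d] g d
      by simp
    hence "\<bar>real_of_int i\<bar> \<le> 2 * N / \<kappa> \<and> \<bar>real_of_int j\<bar> \<le> 2 * N / \<kappa>"
      using abs_le_sq_int[of j] abs_le_sq_int[of i] zero_le_power2[of "real_of_int i"] zero_le_power2[of "real_of_int j"]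
      by linarith
    hence ?thesis by (simp add: le_max_iff_disj) }
  moreover
  { assume t4: "t = 4"
    have ne: "\<bar>i\<bar> \<noteq> \<bar>j\<bar>" using v t4 by (simp add: valid_def)
    have F4: "\<bar>?w + 1 * (?O i - ?O j)\<bar> < \<gamma> * real_of_int ((\<bar>i\<bar> - \<bar>j\<bar>) * (\<bar>i\<bar> + \<bar>j\<bar>)) * d"
      using F t4 by (simp add: Fx_def wt_def algebra_simps)
    have gt: "\<bar>i\<bar> > \<bar>j\<bar>"
    proof (rule ccontr)
      assume "\<not> \<bar>i\<bar> > \<bar>j\<bar>"
      hence "\<bar>i\<bar> - \<bar>j\<bar> \<le> 0" by simp
      hence "(\<bar>i\<bar> - \<bar>j\<bar>) * (\<bar>i\<bar> + \<bar>j\<bar>) \<le> 0" by (simp add: mult_nonpos_nonneg)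
      hence P: "real_of_int ((\<bar>i\<bar> - \<bar>j\<bar>) * (\<bar>i\<bar> + \<bar>j\<bar>)) \<le> 0" by (simp only: of_int_le_0_iff)
      have "\<gamma> * real_of_int ((\<bar>i\<bar> - \<bar>j\<bar>) * (\<bar>i\<bar> + \<bar>j\<bar>)) \<le> 0"
        using g(1) P by (intro mult_nonneg_nonpos) auto
      hence "\<gamma> * real_of_int ((\<bar>i\<bar> - \<bar>j\<bar>) * (\<bar>i\<bar> + \<bar>j\<bar>)) * d \<le> 0"
        using d(1) by (rule mult_nonpos_nonneg)
      thus False using F4 by linarith
    qed
    let ?A = "real_of_int ((\<bar>i\<bar> - \<bar>j\<bar>) * (\<bar>i\<bar> + \<bar>j\<bar>))"
    have A0: "0 \<le> ?A" using gt by simp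
    have OD: "\<kappa> * ?A \<le> ?O i - ?O j" unfolding ka(1) using Om_diff gt c by (simp add: less_imp_le)
    have "?A \<le> 2 * N / \<kappa>"
      using gen_bound[OF ka(2) A0 OD F4 _ w(1)] g d by simp
    moreover have "\<bar>i\<bar> - \<bar>j\<bar> \<ge> 1" using gt by simp
    hence "1 * (\<bar>i\<bar> + \<bar>j\<bar>) \<le> (\<bar>i\<bar> - \<bar>j\<bar>) * (\<bar>i\<bar> + \<bar>j\<bar>)" by (intro mult_right_mono) auto
    hence "\<bar>real_of_int i\<bar> + \<bar>real_of_int j\<bar> \<le> ?A" by (metis mult_1 of_int_abs of_int_add of_int_le_iff)
    ultimately have "\<bar>real_of_int i\<bar> \<le> 2 * N / \<kappa> \<and> \<bar>real_of_int j\<bar> \<le> 2 * N / \<kappa>"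
      using abs_ge_zero[of "real_of_int i"] abs_ge_zero[of "real_of_int j"] by linarith
    hence ?thesis by (simp add: le_max_iff_disj) }
  moreover
  { assume t5: "t = 5"
    hence i0: "i = 0" using v by (simp add: valid_def)
    have "\<bar>?w + c * real_of_int j / (2 * pi)\<bar> < \<gamma> * real_of_int \<bar>j\<bar> * d"
      using F t5 Om_neg[of n1 n2 c eps j xi] by (simp add: Fx_def wt_def add_diff_eq[symmetric])
    hence "\<bar>real_of_int j\<bar> \<le> 4 * pi * N / c" using t5_bound[OF _ c w(1), where j=j and g=\<gamma> and d=d] g d by simp
    hence ?thesis using i0 Q0 by (simp add: le_max_iff_disj) }
  ultimately show ?thesis by blast
qed


lemma notO0:
  assumes "xi \<in> Ob" "xi \<notin> O0 n1 n2 c eps Ob \<tau> \<gamma>"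
  shows "\<exists>k t i j s. k \<noteq> (0,0) \<and> valid t i j s \<and>
           \<bar>Fx n1 n2 c eps k t i j s xi\<bar> < \<gamma> * wt t i j * knorm k powr (-\<tau>)"
proof (rule ccontr)
  assume H: "\<not> ?thesis"
  have H': "\<gamma> * wt t i j * knorm k powr (-\<tau>) \<le> \<bar>Fx n1 n2 c eps k t i j s xi\<bar>"
    if "k \<noteq> (0,0)" "valid t i j s" for k t i j s
    using H that by (meson not_less)
  have "xi \<in> O0 n1 n2 c eps Ob \<tau> \<gamma>"
    unfolding O0_def Let_def
  proof (intro CollectI conjI allI impI ballI)
    show "xi \<in> Ob" by fact
  next
    fix k :: "int \<times> int" assume k: "k \<noteq> (0,0)"
    show "\<gamma> * knorm k powr - \<tau> \<le> \<bar>kdot n1 n2 c eps k xi\<bar>"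
      using H'[OF k, of 1 0 0 1] by (simp add: valid_def Fx_def wt_def)
    fix j :: int and s assume j: "j \<in> Z1 n1 n2" and s: "s \<in> {-1, 1::real}"
    show "\<gamma> * (real_of_int \<bar>j\<bar>)\<^sup>2 * knorm k powr - \<tau> \<le> \<bar>kdot n1 n2 c eps k xi + s * Omega n1 n2 c eps j xi\<bar>"
      using H'[OF k, of 2 0 j s] s by (simp add: valid_def Fx_def wt_def)
  next
    fix k :: "int \<times> int" and i j :: int and s assume k: "k \<noteq> (0,0)" and s: "s \<in> {-1, 1::real}"
    show "\<gamma> * (real_of_int (\<bar>i\<bar> + \<bar>j\<bar>))\<^sup>2 * knorm k powr - \<tau> \<le> \<bar>kdot n1 n2 c eps k xi + s * (Omega n1 n2 c eps i xi + Omega n1 n2 c eps j xi)\<bar>"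
      using H'[OF k, of 3 i j s] s by (simp add: valid_def Fx_def wt_def)
  next
    fix k :: "int \<times> int" and i j :: int assume k: "k \<noteq> (0,0)" and ij: "\<bar>i\<bar> \<noteq> \<bar>j\<bar>"
    show "\<gamma> * real_of_int ((\<bar>i\<bar> - \<bar>j\<bar>) * (\<bar>i\<bar> + \<bar>j\<bar>)) * knorm k powr - \<tau> \<le> \<bar>kdot n1 n2 c eps k xi + Omega n1 n2 c eps i xi - Omega n1 n2 c eps j xi\<bar>"
      using H'[OF k, of 4 i j 1] ij by (simp add: valid_def Fx_def wt_def)
  next
    fix k :: "int \<times> int" and j :: int assume k: "k \<noteq> (0,0)"
    show "\<gamma> * real_of_int \<bar>j\<bar> * knorm k powr - \<tau> \<le> \<bar>kdot n1 n2 c eps k xi + Omega n1 n2 c eps j xi - Omega n1 n2 c eps (- j) xi\<bar>"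
      using H'[OF k, of 5 0 j 1] by (simp add: valid_def Fx_def wt_def)
  qed
  thus False using assms(2) by contradiction
qed


lemma wt_bound:
  assumes "\<bar>real_of_int i\<bar> \<le> L" "\<bar>real_of_int j\<bar> \<le> L" "1 \<le> L"
  shows "wt t i j \<le> 4 * L^2"
proof -
  have L2: "L \<le> L^2" using assms(3) by (simp add: power2_eq_square)
  have j2: "(real_of_int j)^2 \<le> L^2" using power_mono[OF assms(2) abs_ge_zero, of 2] by simp
  have i2: "(real_of_int i)^2 \<le> L^2" using power_mono[OF assms(1) abs_ge_zero, of 2] by simp
  have ij: "(\<bar>real_of_int i\<bar> + \<bar>real_of_int j\<bar>)^2 \<le> (2 * L)^2"
    using assms by (intro power_mono) auto
  have e4: "real_of_int ((\<bar>i\<bar> - \<bar>j\<bar>) * (\<bar>i\<bar> + \<bar>j\<bar>)) = (real_of_int i)^2 - (real_of_int j)^2"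
    by (simp add: power2_eq_square algebra_simps)
  have c1: "1 \<le> 4 * L^2" using L2 assms(3) by linarith
  have c2: "(real_of_int \<bar>j\<bar>)^2 \<le> 4 * L^2" using j2 zero_le_power2[of L] by (simp only: of_int_abs power2_abs)
  have c3: "(real_of_int (\<bar>i\<bar> + \<bar>j\<bar>))^2 \<le> 4 * L^2" using ij by (simp add: power_mult_distrib)
  have c4: "real_of_int ((\<bar>i\<bar> - \<bar>j\<bar>) * (\<bar>i\<bar> + \<bar>j\<bar>)) \<le> 4 * L^2"
    unfolding e4 using i2 zero_le_power2[of "real_of_int j"] zero_le_power2[of L] by linarith
  have c5: "real_of_int \<bar>j\<bar> \<le> 4 * L^2" using assms(2) L2 zero_le_power2[of L] by simp
  show ?thesis unfolding wt_def using c1 c2 c3 c4 c5 by simp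
qed

lemma slab_props:
  assumes "n2 - n1 = 4" "odd n1" "Ob \<subseteq> cbox (-B,-B) (B,B)" "B \<ge> 0" "Ob \<in> sets lebesgue"
    "k \<noteq> (0,0)" "s \<in> {-1,1}"
  shows "{xi\<in>Ob. \<bar>Fx n1 n2 c eps k t i j s xi\<bar> < r} \<in> sets lebesgue"
    "measure lebesgue {xi\<in>Ob. \<bar>Fx n1 n2 c eps k t i j s xi\<bar> < r} \<le> 16 * pi * B * max r 0"
proof -
  define b where "b = Fx n1 n2 c eps k t i j s (0,0)"
  have aff: "Fx n1 n2 c eps k t i j s p = A1 n1 k t s * fst p + A2 n2 k t s * snd p + b" for p
    unfolding b_def by (rule Fx_affine[OF assms(1)])
  have eq: "{xi\<in>Ob. \<bar>Fx n1 n2 c eps k t i j s xi\<bar> < r} =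
     {p\<in>Ob. \<bar>A1 n1 k t s * fst p + A2 n2 k t s * snd p + b\<bar> < r}"
    by (simp only: aff)
  show "{xi\<in>Ob. \<bar>Fx n1 n2 c eps k t i j s xi\<bar> < r} \<in> sets lebesgue"
    unfolding eq using slab_sets[OF assms(5)] by blast
  show "measure lebesgue {xi\<in>Ob. \<bar>Fx n1 n2 c eps k t i j s xi\<bar> < r} \<le> 16 * pi * B * max r 0"
  proof (cases "r \<ge> 0")
    case True
    have "measure lebesgue {p\<in>Ob. \<bar>A1 n1 k t s * fst p + A2 n2 k t s * snd p + b\<bar> < r} \<le> 4 * B * r / (1 / (4 * pi))"
      using coef_bound[OF assms(2,7,6), of t n2] assms(3,4) True pi_gt_zero
      by (intro slab_measure) auto
    thus ?thesis unfolding eq using True by (simp add: mult_ac)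
  next
    case False
    hence E: "{xi\<in>Ob. \<bar>Fx n1 n2 c eps k t i j s xi\<bar> < r} = {}" by auto
    have "measure lebesgue {xi\<in>Ob. \<bar>Fx n1 n2 c eps k t i j s xi\<bar> < r} = 0" by (simp only: E measure_empty)
    thus ?thesis using False by simp
  qed
qed

lemma powr_bound:
  assumes "1 \<le> (n::real)" "\<tau> \<ge> 8"
  shows "n^6 * n powr (-\<tau>) \<le> inverse (n^2)"
proof -
  have n0: "0 \<le> n" using assms by simp
  have "n^6 * n powr (-\<tau>) = n powr 6 * n powr (-\<tau>)" using n0 by (simp add: powr_numeral)
  also have "\<dots> = n powr (6 - \<tau>)" by (simp add: powr_add[symmetric])
  also have "\<dots> \<le> n powr (-2)" using assms by (intro powr_mono) auto
  also have "\<dots> = inverse (n^2)" using n0 by (simp add: powr_minus powr_numeral)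
  finally show ?thesis .
qed


lemma knorm_set_sub: "{k::int\<times>int. knorm k = real n} \<subseteq> {- int n..int n} \<times> {- int n..int n}"
proof
  fix k :: "int \<times> int" assume "k \<in> {k. knorm k = real n}"
  hence "real_of_int (\<bar>fst k\<bar> + \<bar>snd k\<bar>) = real_of_int (int n)" unfolding knorm_def by simp
  hence "\<bar>fst k\<bar> + \<bar>snd k\<bar> = int n" by (simp only: of_int_eq_iff)
  thus "k \<in> {- int n..int n} \<times> {- int n..int n}" by (cases k) auto
qed

lemma finite_Idx: "finite ({k::int\<times>int. knorm k = real n} \<times> {1..5::nat} \<times> {-M*int n..M*int n} \<times> {-M*int n..M*int n} \<times> {-1,1::real})"
proof -
  have "finite {k::int\<times>int. knorm k = real n}" by (rule finite_subset[OF knorm_set_sub]) auto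
  thus ?thesis by (intro finite_cartesian_product) auto
qed

lemma card_Idx:
  assumes "M \<ge> 1" "n \<ge> 1"
  shows "real (card ({k::int\<times>int. knorm k = real n} \<times> {1..5::nat} \<times> {-M*int n..M*int n} \<times> {-M*int n..M*int n} \<times> {-1,1::real}))
     \<le> 810 * (real_of_int M)^2 * (real n)^4"
proof -
  let ?A = "{k::int\<times>int. knorm k = real n}"
  let ?I = "{-M*int n..M*int n}"
  have cA: "card ?A \<le> card ({- int n..int n} \<times> {- int n..int n})"
    by (intro card_mono knorm_set_sub) auto
  have "card ({- int n..int n} \<times> {- int n..int n}) = (2 * n + 1) * (2 * n + 1)"
  proof -
    have "card {- int n..int n} = 2 * n + 1" by simp
    thus ?thesis by (simp add: card_cartesian_product)
  qed
  hence cA': "real (card ?A) \<le> 9 * (real n)^2"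
  proof -
    assume e: "card ({- int n..int n} \<times> {- int n..int n}) = (2 * n + 1) * (2 * n + 1)"
    have "real (card ?A) \<le> real ((2 * n + 1) * (2 * n + 1))" using cA e by (metis of_nat_le_iff)
    also have "\<dots> = (2 * real n + 1)^2" by (simp add: power2_eq_square algebra_simps)
    also have "\<dots> \<le> (3 * real n)^2" using assms(2) by (intro power_mono) auto
    finally show ?thesis by (simp add: power_mult_distrib)
  qed
  have cI: "real (card ?I) = 2 * real_of_int M * real n + 1"
  proof -
    have "M * int n \<ge> 0" using assms by simp
    hence "card ?I = nat (2 * (M * int n) + 1)" by simp
    thus ?thesis using \<open>M * int n \<ge> 0\<close> by simp
  qed
  have cI': "real (card ?I) \<le> 3 * real_of_int M * real n"
  proof -
    have "1 \<le> real_of_int M" "1 \<le> real n" using assms by auto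
    hence "1 * 1 \<le> real_of_int M * real n" by (intro mult_mono) auto
    thus ?thesis using cI by linarith
  qed
  have "card (?A \<times> {1..5::nat} \<times> ?I \<times> ?I \<times> {-1,1::real}) = card ?A * (5 * (card ?I * (card ?I * 2)))"
    by (simp add: card_cartesian_product)
  hence "real (card (?A \<times> {1..5::nat} \<times> ?I \<times> ?I \<times> {-1,1::real})) = real (card ?A) * (10 * (real (card ?I))^2)"
    by (simp add: power2_eq_square)
  also have "\<dots> \<le> (9 * (real n)^2) * (10 * (3 * real_of_int M * real n)^2)"
    using cA' cI' by (intro mult_mono power_mono) auto
  also have "\<dots> = 810 * (real_of_int M)^2 * (real n)^4" by (simp add: power2_eq_square power4_eq_xxxx)
  finally show ?thesis .
qed


theorem proposition4p2:
  fixes n1 n2 :: int and c eps :: real and Ob :: "(real \<times> real) set"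
  assumes "0 < n1" "n1 < n2" "odd n1" "n2 - n1 = 4"
    and "c > 0" "eps > 0" "1 / eps ^ 4 > c / (2 * pi)"
    and "bounded Ob" "Ob \<subseteq> {xi. fst xi > 0 \<and> snd xi > 0}"
    and "Ob \<in> sets lebesgue"
  shows "\<exists>\<tau>0. \<forall>\<tau> > \<tau>0. \<exists>\<gamma>0 > 0. \<exists>C > 0. \<forall>\<gamma>. 0 < \<gamma> \<and> \<gamma> \<le> \<gamma>0 \<longrightarrow>
           measure lebesgue (Ob - O0 n1 n2 c eps Ob \<tau> \<gamma>) \<le> C * \<gamma>"
proof -
  note n2eq = assms(4) and odd = assms(3) and cpos = assms(5)
  obtain B where B: "B > 0" "\<And>x. x \<in> Ob \<Longrightarrow> norm x \<le> B" using assms(8) bounded_pos by metis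
  have bnd: "\<bar>fst x\<bar> \<le> B \<and> \<bar>snd x\<bar> \<le> B" if "x \<in> Ob" for x
  proof -
    have "norm (fst x) \<le> B" using norm_fst_le[of "fst x" "snd x"] B(2)[OF that] by simp
    moreover have "norm (snd x) \<le> B" using norm_snd_le[of "snd x" "fst x"] B(2)[OF that] by simp
    ultimately show ?thesis by simp
  qed
  have box: "Ob \<subseteq> cbox (-B,-B) (B,B)"
  proof
    fix x assume x: "x \<in> Ob"
    thus "x \<in> cbox (-B,-B) (B,B)" using bnd[OF x] by (cases x) (auto simp: cbox_Pair_iff)
  qed
  have pos: "fst x > 0 \<and> snd x > 0" if "x \<in> Ob" for x using assms(9) that by auto
  have Obm: "Ob \<in> lmeasurable" by (rule bounded_set_imp_lmeasurable[OF assms(8,10)])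
  define W where "W = 1 / eps ^ 4 * ((real_of_int n1)^2 + (real_of_int n2)^2) + real_of_int (n1 + n2) * c / (4 * pi) + B / pi"
  have Wom: "\<bar>omega1 n1 n2 c eps x\<bar> \<le> W \<and> \<bar>omega2 n1 n2 c eps x\<bar> \<le> W" if "x \<in> Ob" for x
  proof -
    have d1: "real_of_int (n1 - n2) = -4" and d2: "real_of_int (n2 - n1) = 4" using n2eq by simp_all
    have e1: "omega1 n1 n2 c eps x = 1 / eps ^ 4 * (real_of_int n1)^2 + real_of_int (n1 + n2) * c / (4 * pi) - fst x / pi"
      unfolding omega1_def d1 by simp
    have e2: "omega2 n1 n2 c eps x = 1 / eps ^ 4 * (real_of_int n2)^2 + real_of_int (n1 + n2) * c / (4 * pi) + snd x / pi"
      unfolding omega2_def d2 by simp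
    have E0: "0 \<le> 1 / eps ^ 4" using assms(6) by simp
    have a1: "0 \<le> 1 / eps ^ 4 * (real_of_int n1)^2" "0 \<le> 1 / eps ^ 4 * (real_of_int n2)^2" using E0 by simp_all
    have a12: "1 / eps ^ 4 * (real_of_int n1)^2 \<le> 1 / eps ^ 4 * ((real_of_int n1)^2 + (real_of_int n2)^2)"
      "1 / eps ^ 4 * (real_of_int n2)^2 \<le> 1 / eps ^ 4 * ((real_of_int n1)^2 + (real_of_int n2)^2)"
      using E0 by (intro mult_left_mono; simp)+
    have b0: "0 \<le> real_of_int (n1 + n2) * c / (4 * pi)" using assms(1,2,5) pi_gt_zero by simp
    have x1: "0 \<le> fst x / pi" "fst x / pi \<le> B / pi" using pos[OF that] bnd[OF that] pi_gt_zero
      by (auto intro: divide_right_mono)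
    have x2: "0 \<le> snd x / pi" "snd x / pi \<le> B / pi" using pos[OF that] bnd[OF that] pi_gt_zero
      by (auto intro: divide_right_mono)
    show ?thesis unfolding e1 e2 W_def abs_le_iff using a1 a12 b0 x1 x2 by (intro conjI; linarith)
  qed
  have W0: "W \<ge> 0" unfolding W_def using assms(1,2,5) B(1) pi_gt_zero by (intro add_nonneg_nonneg) auto
  have kd: "\<bar>kdot n1 n2 c eps k x\<bar> \<le> knorm k * W" if "x \<in> Ob" for k x
  proof -
    have "\<bar>kdot n1 n2 c eps k x\<bar> \<le> \<bar>real_of_int (fst k)\<bar> * \<bar>omega1 n1 n2 c eps x\<bar> + \<bar>real_of_int (snd k)\<bar> * \<bar>omega2 n1 n2 c eps x\<bar>"
      unfolding kdot_def by (metis abs_mult abs_triangle_ineq)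
    also have "\<dots> \<le> \<bar>real_of_int (fst k)\<bar> * W + \<bar>real_of_int (snd k)\<bar> * W"
      using Wom[OF that] by (intro add_mono mult_left_mono) auto
    also have "\<dots> = knorm k * W" unfolding knorm_def by (simp add: algebra_simps)
    finally show ?thesis .
  qed
  define \<kappa> where "\<kappa> = 1 / eps ^ 4 - c / (4 * pi)"
  have \<kappa>0: "\<kappa> > 0"
  proof -
    have "c / (4 * pi) < c / (2 * pi)" using cpos pi_gt_zero by (intro divide_strict_left_mono) auto
    thus ?thesis unfolding \<kappa>_def using assms(7) by linarith
  qed
  define \<gamma>0 where "\<gamma>0 = min (\<kappa> / 4) (c / (4 * pi))"
  have \<gamma>00: "\<gamma>0 > 0" unfolding \<gamma>0_def using \<kappa>0 cpos pi_gt_zero by simp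
  define M :: int where "M = \<lceil>max (2 * W / \<kappa>) (4 * pi * W / c)\<rceil> + 1"
  have M1: "M \<ge> 1"
  proof -
    have "0 \<le> 2 * W / \<kappa>" using W0 \<kappa>0 by simp
    hence "0 \<le> max (2 * W / \<kappa>) (4 * pi * W / c)" by (simp add: le_max_iff_disj)
    hence "0 \<le> \<lceil>max (2 * W / \<kappa>) (4 * pi * W / c)\<rceil>" by simp
    thus ?thesis unfolding M_def by simp
  qed
  have MQ: "max (2 * W / \<kappa>) (4 * pi * W / c) \<le> real_of_int M" unfolding M_def by linarith
  define K where "K = 51840 * pi * B * (real_of_int M)^4"
  define Ssum where "Ssum = (\<Sum>m. inverse (real (Suc m) ^ 2))"
  have sumS: "summable (\<lambda>m. inverse (real (Suc m) ^ 2))"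
  proof -
    have "summable (\<lambda>n. inverse (real n ^ 2))" by (rule inverse_power_summable) simp
    thus ?thesis by (subst summable_Suc_iff)
  qed
  have K0: "K \<ge> 0" unfolding K_def using B(1) pi_gt_zero by simp
  have S0: "Ssum \<ge> 0" unfolding Ssum_def using sumS by (intro suminf_nonneg) auto
  show ?thesis
  proof (rule exI[of _ 8], intro allI impI)
    fix \<tau> :: real assume \<tau>: "\<tau> > 8"
    show "\<exists>\<gamma>0 > 0. \<exists>C > 0. \<forall>\<gamma>. 0 < \<gamma> \<and> \<gamma> \<le> \<gamma>0 \<longrightarrow> measure lebesgue (Ob - O0 n1 n2 c eps Ob \<tau> \<gamma>) \<le> C * \<gamma>"
    proof (rule exI[of _ \<gamma>0], intro conjI \<gamma>00, rule exI[of _ "K * Ssum + 1"], intro conjI allI impI)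
      show "K * Ssum + 1 > 0" using K0 S0 by (simp add: add_nonneg_pos)
      fix \<gamma> :: real assume g: "0 < \<gamma> \<and> \<gamma> \<le> \<gamma>0"
      define S where "S = (\<lambda>(k, t, i, j, s). {xi \<in> Ob. \<bar>Fx n1 n2 c eps k t i j s xi\<bar> < \<gamma> * wt t i j * knorm k powr (-\<tau>)})"
      define Idx where "Idx = (\<lambda>n::nat. {k::int\<times>int. knorm k = real n} \<times> {1..5::nat} \<times> {-M*int n..M*int n} \<times> {-M*int n..M*int n} \<times> {-1,1::real})"
      define En where "En = (\<lambda>n. \<Union>(S ` Idx n))"
      have dbound: "0 \<le> knorm k powr (-\<tau>) \<and> knorm k powr (-\<tau>) \<le> 1" if "1 \<le> knorm k" for k
      proof -
        have "1 \<le> knorm k powr \<tau>" using that \<tau> by (intro ge_one_powr_ge_zero) auto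
        hence "inverse (knorm k powr \<tau>) \<le> 1" by (simp add: inverse_le_1_iff)
        thus ?thesis by (simp add: powr_minus)
      qed
      have cover: "Ob - O0 n1 n2 c eps Ob \<tau> \<gamma> \<subseteq> (\<Union>m. En (Suc m))"
      proof
        fix xi assume xi: "xi \<in> Ob - O0 n1 n2 c eps Ob \<tau> \<gamma>"
        have xiO: "xi \<in> Ob" and xiN: "xi \<notin> O0 n1 n2 c eps Ob \<tau> \<gamma>" using xi by auto
        obtain k t i j s where k: "k \<noteq> (0,0)" and v: "valid t i j s"
          and F: "\<bar>Fx n1 n2 c eps k t i j s xi\<bar> < \<gamma> * wt t i j * knorm k powr (-\<tau>)"
          using notO0[OF xiO xiN] by blast
        define n where "n = nat (\<bar>fst k\<bar> + \<bar>snd k\<bar>)"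
        have kn: "knorm k = real n" unfolding n_def knorm_def by simp
        have n1: "n \<ge> 1" using k unfolding n_def by (cases k) auto
        have kn1: "1 \<le> knorm k" using kn n1 by simp
        have ib: "\<bar>real_of_int i\<bar> \<le> max (2 * (knorm k * W) / \<kappa>) (4 * pi * (knorm k * W) / c) \<and>
                  \<bar>real_of_int j\<bar> \<le> max (2 * (knorm k * W) / \<kappa>) (4 * pi * (knorm k * W) / c)"
        proof -
          have g1: "0 < \<gamma>" "\<gamma> \<le> \<kappa> / 4" "\<gamma> \<le> c / (4 * pi)" using g unfolding \<gamma>0_def by auto
          have N0: "0 \<le> knorm k * W" using kn1 W0 by simp
          have p: "fst xi > 0" "snd xi > 0" using pos[OF xiO] by auto
          have n20: "0 < n2" using assms(1,2) by simp
          show ?thesis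
            using idx_bound[OF p assms(1) n20 cpos \<kappa>_def \<kappa>0 kd[OF xiO, of k] N0 g1 _ _ v F] dbound[OF kn1] by blast
        qed
        have "max (2 * (knorm k * W) / \<kappa>) (4 * pi * (knorm k * W) / c) = real n * max (2 * W / \<kappa>) (4 * pi * W / c)"
          unfolding kn by (simp add: max_mult_distrib_left mult_ac)
        also have "\<dots> \<le> real n * real_of_int M" using MQ by (intro mult_left_mono) auto
        also have "\<dots> = real_of_int (M * int n)" by simp
        finally have "\<bar>real_of_int i\<bar> \<le> real_of_int (M * int n) \<and> \<bar>real_of_int j\<bar> \<le> real_of_int (M * int n)"
          using ib by linarith
        hence "\<bar>i\<bar> \<le> M * int n \<and> \<bar>j\<bar> \<le> M * int n" by (metis of_int_abs of_int_le_iff)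
        hence "(k, t, i, j, s) \<in> Idx n" unfolding Idx_def using kn v by (auto simp: valid_def)
        moreover have "xi \<in> S (k, t, i, j, s)" unfolding S_def using xiO F by simp
        ultimately have "xi \<in> En n" unfolding En_def by blast
        moreover have "n = Suc (n - 1)" using n1 by simp
        ultimately have "xi \<in> En (Suc (n - 1))" by simp
        thus "xi \<in> (\<Union>m. En (Suc m))" by blast
      qed
      have Idx_k: "k \<noteq> (0,0) \<and> s \<in> {-1,1} \<and> \<bar>i\<bar> \<le> M * int n \<and> \<bar>j\<bar> \<le> M * int n \<and> knorm k = real n"
        if "(k, t, i, j, s) \<in> Idx n" "n \<ge> 1" for n k t i j s
      proof -
        have "knorm k = real n" using that unfolding Idx_def by simp
        hence "k \<noteq> (0,0)" using that(2) by (auto simp: knorm_def)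
        moreover have "s \<in> {-1,1} \<and> \<bar>i\<bar> \<le> M * int n \<and> \<bar>j\<bar> \<le> M * int n" using that(1) unfolding Idx_def
          by (simp add: abs_le_iff)
        ultimately show ?thesis using \<open>knorm k = real n\<close> by simp
      qed
      have Ssets: "S p \<in> sets lebesgue" if "p \<in> Idx n" "n \<ge> 1" for p n
      proof -
        obtain k t i j s where p: "p = (k, t, i, j, s)" using prod_cases5 by blast
        have m: "(k, t, i, j, s) \<in> Idx n" using that(1) p by simp
        have ks: "k \<noteq> (0,0)" "s \<in> {-1,1}" using Idx_k[OF m that(2)] by simp_all
        have e: "S p = {xi\<in>Ob. \<bar>Fx n1 n2 c eps k t i j s xi\<bar> < \<gamma> * wt t i j * knorm k powr (-\<tau>)}"
          unfolding p S_def by simp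
        show ?thesis unfolding e by (rule slab_props(1)[OF n2eq odd box _ assms(10) ks]) (use B(1) in simp)
      qed
      have Esets: "En n \<in> sets lebesgue" if "n \<ge> 1" for n
      proof -
        have "finite (Idx n)" unfolding Idx_def by (rule finite_Idx)
        thus ?thesis unfolding En_def using Ssets[OF _ that] by (rule sets.finite_UN)
      qed
      have Esub: "En n \<subseteq> Ob" for n unfolding En_def S_def by auto
      have g0: "0 \<le> \<gamma>" using g by simp
      have Smeas: "measure lebesgue (S p) \<le> 64 * pi * B * \<gamma> * (real_of_int M)^2 * (real n)^2 * real n powr (-\<tau>)"
        if "p \<in> Idx n" "n \<ge> 1" for p n
      proof -
        obtain k t i j s where p: "p = (k, t, i, j, s)" using prod_cases5 by blast
        have m: "(k, t, i, j, s) \<in> Idx n" using that(1) p by simp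
        have ks: "k \<noteq> (0,0)" "s \<in> {-1,1}" and ij: "\<bar>i\<bar> \<le> M * int n" "\<bar>j\<bar> \<le> M * int n"
          and kn: "knorm k = real n" using Idx_k[OF m that(2)] by simp_all
        have e: "S p = {xi\<in>Ob. \<bar>Fx n1 n2 c eps k t i j s xi\<bar> < \<gamma> * wt t i j * knorm k powr (-\<tau>)}"
          unfolding p S_def by simp
        define L where "L = real_of_int M * real n"
        have L1: "1 \<le> L"
        proof -
          have "1 \<le> real_of_int M" "1 \<le> real n" using M1 that(2) by auto
          hence "1 * 1 \<le> real_of_int M * real n" by (intro mult_mono) auto
          thus ?thesis unfolding L_def by simp
        qed
        have iL: "\<bar>real_of_int i\<bar> \<le> L" "\<bar>real_of_int j\<bar> \<le> L" unfolding L_def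
          using ij by (metis of_int_abs of_int_le_iff of_int_mult of_int_of_nat_eq)+
        have wb: "wt t i j \<le> 4 * L^2" by (rule wt_bound[OF iL L1])
        define d where "d = real n powr (-\<tau>)"
        have d0: "0 \<le> d" unfolding d_def by simp
        have "\<gamma> * wt t i j * d \<le> \<gamma> * (4 * L^2) * d"
          using wb g0 d0 by (intro mult_right_mono mult_left_mono) auto
        moreover have "0 \<le> \<gamma> * (4 * L^2) * d" using g0 d0 by simp
        ultimately have mx: "max (\<gamma> * wt t i j * d) 0 \<le> \<gamma> * (4 * L^2) * d" by simp
        have "measure lebesgue (S p) \<le> 16 * pi * B * max (\<gamma> * wt t i j * d) 0"
          unfolding e kn d_def[symmetric] by (rule slab_props(2)[OF n2eq odd box _ assms(10) ks]) (use B(1) in simp)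
        also have "\<dots> \<le> 16 * pi * B * (\<gamma> * (4 * L^2) * d)"
          using mx B(1) pi_gt_zero by (intro mult_left_mono) auto
        also have "\<dots> = 64 * pi * B * \<gamma> * (real_of_int M)^2 * (real n)^2 * real n powr (-\<tau>)"
          unfolding L_def d_def by (simp add: power_mult_distrib)
        finally show ?thesis .
      qed
      have Emeas: "measure lebesgue (En n) \<le> K * \<gamma> * inverse (real n ^ 2)" if "n \<ge> 1" for n
      proof -
        let ?b = "64 * pi * B * \<gamma> * (real_of_int M)^2 * (real n)^2 * real n powr (-\<tau>)"
        have fin: "finite (Idx n)" unfolding Idx_def by (rule finite_Idx)
        have "measure lebesgue (En n) \<le> (\<Sum>p\<in>Idx n. measure lebesgue (S p))"
          unfolding En_def using Ssets[OF _ that] by (intro measure_UNION_le[OF fin])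
        also have "\<dots> \<le> real (card (Idx n)) * ?b"
          using Smeas[OF _ that] by (intro sum_bounded_above) auto
        also have "\<dots> \<le> (810 * (real_of_int M)^2 * (real n)^4) * ?b"
          using card_Idx[OF M1 that] B(1) pi_gt_zero g0 unfolding Idx_def
          by (intro mult_right_mono) auto
        also have "\<dots> = K * \<gamma> * ((real n)^6 * real n powr (-\<tau>))"
        proof -
          have p6: "(real n)^6 = real n * (real n * (real n * (real n * (real n * real n))))" by (simp add: eval_nat_numeral)
          show ?thesis unfolding K_def p6 by (simp add: power_mult_distrib power2_eq_square power4_eq_xxxx algebra_simps)
        qed
        also have "\<dots> \<le> K * \<gamma> * inverse (real n ^ 2)"
          using powr_bound[of "real n" \<tau>] that \<tau> K0 g0 by (intro mult_left_mono) auto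
        finally show ?thesis .
      qed
      define f where "f = (\<lambda>m. measure lebesgue (En (Suc m)))"
      define h where "h = (\<lambda>m. K * \<gamma> * inverse (real (Suc m) ^ 2))"
      have fh: "f m \<le> h m" for m unfolding f_def h_def by (rule Emeas) simp
      have f0: "0 \<le> f m" for m unfolding f_def by simp
      have sh: "summable h" unfolding h_def by (intro summable_mult sumS)
      have sf: "summable f" by (rule summable_comparison_test'[OF sh, of 0]) (use fh f0 in simp)
      have Efm: "En (Suc m) \<in> fmeasurable lebesgue" for m
        by (rule fmeasurableI2[OF Obm Esub Esets]) simp
      have rng: "range (\<lambda>m. En (Suc m)) \<subseteq> sets lebesgue" unfolding image_subset_iff using Esets by simp
      have "(\<Sum>m. emeasure lebesgue (En (Suc m))) = (\<Sum>m. ennreal (f m))"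
        unfolding f_def by (rule suminf_cong) (rule emeasure_eq_measure2[OF Efm])
      also have "\<dots> \<noteq> \<infinity>" using ennreal_suminf_neq_top[OF sf f0] by simp
      finally have fin: "(\<Sum>m. emeasure lebesgue (En (Suc m))) \<noteq> \<infinity>" .
      have "measure lebesgue (\<Union>m. En (Suc m)) \<le> (\<Sum>m. f m)"
        unfolding f_def by (rule measure_subadditive_countably[OF rng fin])
      also have "\<dots> \<le> (\<Sum>m. h m)" by (rule suminf_le[OF fh sf sh])
      also have "\<dots> = K * \<gamma> * Ssum" unfolding h_def Ssum_def by (rule suminf_mult[OF sumS])
      finally have "measure lebesgue (\<Union>m. En (Suc m)) \<le> K * \<gamma> * Ssum" .
      moreover have "measure lebesgue (Ob - O0 n1 n2 c eps Ob \<tau> \<gamma>) \<le> measure lebesgue (\<Union>m. En (Suc m))"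
      proof (cases "Ob - O0 n1 n2 c eps Ob \<tau> \<gamma> \<in> sets lebesgue")
        case True
        have "(\<Union>m. En (Suc m)) \<in> sets lebesgue" using rng by (rule sets.countable_UN)
        moreover have "(\<Union>m. En (Suc m)) \<subseteq> Ob" using Esub by blast
        ultimately have "(\<Union>m. En (Suc m)) \<in> fmeasurable lebesgue" using fmeasurableI2[OF Obm] by blast
        thus ?thesis using cover True by (intro measure_mono_fmeasurable)
      next
        case False
        have "measure lebesgue (Ob - O0 n1 n2 c eps Ob \<tau> \<gamma>) = 0" by (rule measure_notin_sets[OF False])
        thus ?thesis by simp
      qed
      moreover have "(K * Ssum + 1) * \<gamma> = K * \<gamma> * Ssum + \<gamma>" by (simp add: algebra_simps)
      ultimately show "measure lebesgue (Ob - O0 n1 n2 c eps Ob \<tau> \<gamma>) \<le> (K * Ssum + 1) * \<gamma>"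
        using g by linarith
    qed
  qed
qed

end
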